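(* Let $n\ge 2$, let $\mathcal{S}\subseteq(\mathbb{C}^d)^{\otimes n}$ be the permutation-symmetric subspace, and let $B$ be a $d\times d$ complex matrix with distinct eigenvalues $\lambda_1,\ldots,\lambda_p$ and corresponding generalized eigenspaces $V_1,\ldots,V_p\subseteq\mathbb{C}^d$ (so $\mathbb{C}^d=V_1\oplus\cdots\oplus V_p$). If $|\psi\rangle\in\mathcal{S}$ satisfies $B_{(1)}|\psi\rangle\in\mathcal{S}$, then $$|\psi\rangle\in\bigoplus_{i=1}^p\mathrm{Sym}^n(V_i),$$ where $\mathrm{Sym}^n(V_i)$ denotes the permutation-symmetric subspace of $V_i^{\otimes n}\subseteq(\mathbb{C}^d)^{\otimes n}$.
   Context: $\mathcal{S}$ is the set of vectors in $(\mathbb{C}^d)^{\otimes n}$ invariant under all permutations of the $n$ tensor factors. For a $d\times d$ matrix $Y$, $Y_{(1)}$ denotes $Y\otimes\mathbb{I}\otimes\cdots\otimes\mathbb{I}$ on $(\mathbb{C}^d)^{\otimes n}$. *)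

theory Defs
  imports "HOL-Combinatorics.Permutations" "Jordan_Normal_Form.Char_Poly"
begin

text \<open>Tensors in (C^d)^{tensor n} are represented as coefficient functions on
multi-indices i :: nat => nat with i k < d for k < n and i k = 0 for k >= n
(the basis e_{i 0} tensor ... tensor e_{i (n-1)}); values outside the index set are 0.\<close>

definition idx :: "nat \<Rightarrow> nat \<Rightarrow> (nat \<Rightarrow> nat) set" where
  "idx n d = {i. (\<forall>k<n. i k < d) \<and> (\<forall>k\<ge>n. i k = 0)}"

definition tensor_space :: "nat \<Rightarrow> nat \<Rightarrow> ((nat \<Rightarrow> nat) \<Rightarrow> complex) set" where
  "tensor_space n d = {\<psi>. \<forall>i. i \<notin> idx n d \<longrightarrow> \<psi> i = 0}"

definition sym_space :: "nat \<Rightarrow> nat \<Rightarrow> ((nat \<Rightarrow> nat) \<Rightarrow> complex) set" where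
  "sym_space n d = {\<psi> \<in> tensor_space n d.
      \<forall>\<sigma>. \<sigma> permutes {..<n} \<longrightarrow> (\<forall>i\<in>idx n d. \<psi> (i \<circ> \<sigma>) = \<psi> i)}"

text \<open>Y_(1) = Y tensor I tensor ... tensor I, acting on the first factor (index 0).\<close>
definition op_first :: "complex mat \<Rightarrow> nat \<Rightarrow> nat \<Rightarrow> ((nat \<Rightarrow> nat) \<Rightarrow> complex) \<Rightarrow> ((nat \<Rightarrow> nat) \<Rightarrow> complex)" where
  "op_first Y n d \<psi> = (\<lambda>i. if i \<in> idx n d then (\<Sum>j<d. Y $$ (i 0, j) * \<psi> (i(0 := j))) else 0)"

definition prod_tensor :: "nat \<Rightarrow> nat \<Rightarrow> (nat \<Rightarrow> complex vec) \<Rightarrow> ((nat \<Rightarrow> nat) \<Rightarrow> complex)" where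
  "prod_tensor n d vs = (\<lambda>i. if i \<in> idx n d then (\<Prod>k<n. vs k $ i k) else 0)"

definition tensor_power :: "nat \<Rightarrow> nat \<Rightarrow> complex vec set \<Rightarrow> ((nat \<Rightarrow> nat) \<Rightarrow> complex) set" where
  "tensor_power n d V = {\<psi>. \<exists>(m::nat) (c :: nat \<Rightarrow> complex) (vs :: nat \<Rightarrow> nat \<Rightarrow> complex vec).
      (\<forall>j<m. \<forall>k<n. vs j k \<in> V) \<and> \<psi> = (\<lambda>i. \<Sum>j<m. c j * prod_tensor n d (vs j) i)}"

definition sym_power :: "nat \<Rightarrow> nat \<Rightarrow> complex vec set \<Rightarrow> ((nat \<Rightarrow> nat) \<Rightarrow> complex) set" where
  "sym_power n d V = tensor_power n d V \<inter> sym_space n d"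

definition gen_eigenspace :: "complex mat \<Rightarrow> complex \<Rightarrow> complex vec set" where
  "gen_eigenspace B c = {v \<in> carrier_vec (dim_row B).
      \<exists>k::nat. ((B - c \<cdot>\<^sub>m 1\<^sub>m (dim_row B)) ^\<^sub>m k) *\<^sub>v v = 0\<^sub>v (dim_row B)}"

end

theory Submission
  imports Defs "Jordan_Normal_Form.Schur_Decomposition"
begin


lemma sq_mult[simp]: "A \<in> carrier_mat d d \<Longrightarrow> B \<in> carrier_mat d d \<Longrightarrow> A * B \<in> carrier_mat d d"
  by auto
lemma sq_assoc: "A \<in> carrier_mat d d \<Longrightarrow> B \<in> carrier_mat d d \<Longrightarrow> C \<in> carrier_mat d d \<Longrightarrow> A * B * C = A * (B * C)"
  by auto
lemma sq_minus[simp]: "A \<in> carrier_mat d d \<Longrightarrow> B \<in> carrier_mat d d \<Longrightarrow> A - B \<in> carrier_mat d d"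
  by (auto simp: minus_carrier_mat)

lemma sq_mult_vec[simp]: "A \<in> carrier_mat d d \<Longrightarrow> v \<in> carrier_vec d \<Longrightarrow> A *\<^sub>v v \<in> carrier_vec d"
  by auto

lemma sq_distL: "A \<in> carrier_mat d d \<Longrightarrow> B \<in> carrier_mat d d \<Longrightarrow> C \<in> carrier_mat d d \<Longrightarrow> A * (B + C) = A * B + A * C"
  by (rule mult_add_distrib_mat) auto
lemma sq_distR: "A \<in> carrier_mat d d \<Longrightarrow> B \<in> carrier_mat d d \<Longrightarrow> C \<in> carrier_mat d d \<Longrightarrow> (A + B) * C = A * C + B * C"
  by (rule add_mult_distrib_mat) auto

definition meval :: "complex poly \<Rightarrow> complex mat \<Rightarrow> complex mat" where
  "meval p M = fold_coeffs (\<lambda>a X. a \<cdot>\<^sub>m 1\<^sub>m (dim_row M) + M * X) p (0\<^sub>m (dim_row M) (dim_row M))"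

lemma meval_0[simp]: "meval 0 M = 0\<^sub>m (dim_row M) (dim_row M)"
  by (simp add: meval_def)

lemma meval_carrier[simp]: assumes "M \<in> carrier_mat d d" shows "meval p M \<in> carrier_mat d d"
proof (induct p)
  case 0 then show ?case using assms by simp
next
  case (pCons a p)
  then show ?case using assms
    by (cases "p = 0") (auto simp: meval_def)
qed

lemma meval_dims[simp]: "M \<in> carrier_mat d d \<Longrightarrow> dim_row (meval p M) = d"
  "M \<in> carrier_mat d d \<Longrightarrow> dim_col (meval p M) = d"
  using meval_carrier by blast+

lemma meval_pCons: assumes "M \<in> carrier_mat d d"
  shows "meval (pCons a p) M = a \<cdot>\<^sub>m 1\<^sub>m d + M * meval p M"
proof (cases "p = 0")
  case True
  show ?thesis
  proof (cases "a = 0")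
    case True with \<open>p=0\<close> assms show ?thesis by (auto simp: meval_def)
  next
    case False with \<open>p=0\<close> assms show ?thesis by (auto simp: meval_def)
  qed
next
  case False with assms show ?thesis by (auto simp: meval_def)
qed

lemma meval_add: assumes M: "M \<in> carrier_mat d d"
  shows "meval (p + q) M = meval p M + meval q M"
proof (induct p arbitrary: q)
  case 0 then show ?case using M by simp
next
  case (pCons a p)
  obtain b q' where q: "q = pCons b q'" by (cases q) auto
  have c1: "meval p M \<in> carrier_mat d d" "meval q' M \<in> carrier_mat d d" using M by auto
  have "meval (pCons a p + q) M = (a + b) \<cdot>\<^sub>m 1\<^sub>m d + M * (meval p M + meval q' M)"
    unfolding q by (simp add: meval_pCons[OF M] pCons)
  also have "\<dots> = (a \<cdot>\<^sub>m 1\<^sub>m d + M * meval p M) + (b \<cdot>\<^sub>m 1\<^sub>m d + M * meval q' M)"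
    using M c1 by (intro eq_matI) (auto simp: scalar_prod_def sum.distrib algebra_simps carrier_matD[OF M])
  finally show ?case unfolding q meval_pCons[OF M] .
qed

lemma meval_smult: assumes M: "M \<in> carrier_mat d d"
  shows "meval (Polynomial.smult c p) M = c \<cdot>\<^sub>m meval p M"
proof (induct p)
  case 0 then show ?case using M by auto
next
  case (pCons a p)
  have "meval (Polynomial.smult c (pCons a p)) M = (c*a) \<cdot>\<^sub>m 1\<^sub>m d + M * (c \<cdot>\<^sub>m meval p M)"
    by (simp add: meval_pCons[OF M] pCons)
  also have "\<dots> = c \<cdot>\<^sub>m (a \<cdot>\<^sub>m 1\<^sub>m d + M * meval p M)"
    using M by (intro eq_matI) (auto simp: scalar_prod_def sum_distrib_left algebra_simps carrier_matD[OF M])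
  finally show ?case unfolding meval_pCons[OF M] .
qed

lemma meval_mult: assumes M: "M \<in> carrier_mat d d"
  shows "meval (p * q) M = meval p M * meval q M"
proof (induct p)
  case 0 then show ?case using M by auto
next
  case (pCons a p)
  have "meval (pCons a p * q) M = a \<cdot>\<^sub>m meval q M + (0 \<cdot>\<^sub>m 1\<^sub>m d + M * (meval p M * meval q M))"
    by (simp add: meval_pCons[OF M] pCons meval_add[OF M] meval_smult[OF M] del: pCons_0_0)
  also have "\<dots> = (a \<cdot>\<^sub>m 1\<^sub>m d + M * meval p M) * meval q M"
  proof -
    have c: "meval p M \<in> carrier_mat d d" "meval q M \<in> carrier_mat d d" using M by auto
    have "(a \<cdot>\<^sub>m 1\<^sub>m d + M * meval p M) * meval q M = (a \<cdot>\<^sub>m 1\<^sub>m d) * meval q M + (M * meval p M) * meval q M"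
      using M c by (intro add_mult_distrib_mat[of _ d d]) auto
    also have "\<dots> = a \<cdot>\<^sub>m meval q M + M * (meval p M * meval q M)"
      using M c by (simp add: mult_smult_assoc_mat[of _ d d _ d] assoc_mult_mat[OF M c])
    also have "\<dots> = a \<cdot>\<^sub>m meval q M + (0 \<cdot>\<^sub>m 1\<^sub>m d + M * (meval p M * meval q M))"
      using M c by (intro eq_matI) auto
    finally show ?thesis by simp
  qed
  finally show ?case unfolding meval_pCons[OF M] .
qed

lemma meval_1[simp]: assumes M: "M \<in> carrier_mat d d" shows "meval 1 M = 1\<^sub>m d"
  using meval_pCons[OF M, of 1 0] M by (simp add: one_pCons) (intro eq_matI, auto)

lemma meval_lin: assumes M: "M \<in> carrier_mat d d" shows "meval [:-c, 1:] M = M - c \<cdot>\<^sub>m 1\<^sub>m d"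
  using M by (simp add: meval_pCons[OF M]) (intro eq_matI, auto)

lemma meval_power: assumes M: "M \<in> carrier_mat d d" shows "meval (p ^ k) M = meval p M ^\<^sub>m k"
  by (induct k) (use M in \<open>auto simp: meval_mult[OF M] power_Suc2 simp del: power_Suc\<close>)

lemma meval_comm: assumes M: "M \<in> carrier_mat d d" shows "meval p M * meval q M = meval q M * meval p M"
  by (metis M meval_mult mult.commute)

lemma meval_X: assumes M: "M \<in> carrier_mat d d" shows "meval [:0, 1:] M = M"
  using meval_lin[OF M, of 0] M by simp (intro eq_matI, auto)




definition lin :: "complex \<Rightarrow> complex poly" where "lin e = [:-e, 1:]"

lemma ut_step: fixes T :: "complex mat"
  assumes T: "T \<in> carrier_mat d d" and ut: "upper_triangular T" and k: "k < d"
    and v: "v \<in> carrier_vec d" and vz: "\<forall>j. Suc k \<le> j \<longrightarrow> j < d \<longrightarrow> v $ j = 0"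
  shows "\<forall>i. k \<le> i \<longrightarrow> i < d \<longrightarrow> ((T - T $$ (k,k) \<cdot>\<^sub>m 1\<^sub>m d) *\<^sub>v v) $ i = 0"
proof (intro allI impI)
  fix i assume ki: "k \<le> i" and id: "i < d"
  have "(T *\<^sub>v v) $ i = (\<Sum>j\<in>{0..<d}. T $$ (i,j) * v $ j)"
    using T v id by (simp add: mult_mat_vec_def scalar_prod_def)
  also have "\<dots> = T $$ (i,i) * v $ i + (\<Sum>j\<in>{0..<d} - {i}. T $$ (i,j) * v $ j)"
    using id by (subst sum.remove[of _ i]) auto
  also have "(\<Sum>j\<in>{0..<d} - {i}. T $$ (i,j) * v $ j) = 0"
  proof (rule sum.neutral, intro ballI)
    fix j assume j: "j \<in> {0..<d} - {i}"
    show "T $$ (i,j) * v $ j = 0"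
    proof (cases "j < i")
      case True then show ?thesis using ut T id unfolding upper_triangular_def by auto
    next
      case False then show ?thesis using vz j ki by auto
    qed
  qed
  finally have tv: "(T *\<^sub>v v) $ i = T $$ (i,i) * v $ i" by simp
  have "((T - T $$ (k,k) \<cdot>\<^sub>m 1\<^sub>m d) *\<^sub>v v) $ i = (\<Sum>j=0..<d. T $$ (i,j) * v $ j - (if j = i then T $$ (k,k) * v $ i else 0))"
    using T v id by (auto simp: mult_mat_vec_def scalar_prod_def left_diff_distrib intro!: sum.cong)
  also have "\<dots> = (T *\<^sub>v v) $ i - T $$ (k,k) * v $ i"
    using T v id by (simp add: sum_subtractf mult_mat_vec_def scalar_prod_def)
  also have "\<dots> = 0"
  proof (cases "i = k")
    case True then show ?thesis using tv by simp
  next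
    case False then have "v $ i = 0" using vz ki id by auto
    then show ?thesis using tv by simp
  qed
  finally show "((T - T $$ (k,k) \<cdot>\<^sub>m 1\<^sub>m d) *\<^sub>v v) $ i = 0" .
qed

lemma ut_annihil_aux: fixes T :: "complex mat"
  assumes T: "T \<in> carrier_mat d d" and ut: "upper_triangular T" and es: "diag_mat T = es"
  shows "k \<le> d \<Longrightarrow> v \<in> carrier_vec d \<Longrightarrow> (\<forall>j. k \<le> j \<longrightarrow> j < d \<longrightarrow> v $ j = 0) \<Longrightarrow>
     meval (prod_list (map lin (take k es))) T *\<^sub>v v = 0\<^sub>v d"
proof (induct k arbitrary: v)
  case 0
  then have "v = 0\<^sub>v d" by (intro eq_vecI) auto
  then show ?case using T by simp
next
  case (Suc k)
  have len: "length es = d" using es T unfolding diag_mat_def by auto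
  have k: "k < d" using Suc by auto
  have esk: "es ! k = T $$ (k,k)" using es k T unfolding diag_mat_def by auto
  have tk: "take (Suc k) es = take k es @ [es ! k]" using len k by (simp add: take_Suc_conv_app_nth)
  let ?L = "meval (prod_list (map lin (take k es))) T"
  have L: "?L \<in> carrier_mat d d" using T by simp
  have "meval (prod_list (map lin (take (Suc k) es))) T = ?L * (T - T $$ (k,k) \<cdot>\<^sub>m 1\<^sub>m d)"
  proof -
    have "prod_list (map lin (take (Suc k) es)) = prod_list (map lin (take k es)) * lin (es!k)"
      unfolding tk by simp
    then show ?thesis by (simp only: meval_mult[OF T] lin_def meval_lin[OF T] esk)
  qed
  then have "meval (prod_list (map lin (take (Suc k) es))) T *\<^sub>v v = ?L *\<^sub>v ((T - T $$ (k,k) \<cdot>\<^sub>m 1\<^sub>m d) *\<^sub>v v)"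
    using L T Suc(3) by (simp) (rule assoc_mult_mat_vec, auto)
  also have "\<dots> = 0\<^sub>v d"
  proof (rule Suc(1))
    show "k \<le> d" using k by simp
    show "(T - T $$ (k, k) \<cdot>\<^sub>m 1\<^sub>m d) *\<^sub>v v \<in> carrier_vec d" using T Suc(3) by simp
    show "\<forall>j. k \<le> j \<longrightarrow> j < d \<longrightarrow> ((T - T $$ (k, k) \<cdot>\<^sub>m 1\<^sub>m d) *\<^sub>v v) $ j = 0"
      by (rule ut_step[OF T ut k Suc(3)]) (use Suc(4) in auto)
  qed
  finally show ?case .
qed

lemma ut_annihil: fixes T :: "complex mat"
  assumes T: "T \<in> carrier_mat d d" and ut: "upper_triangular T" and es: "diag_mat T = es"
  shows "meval (prod_list (map lin es)) T = 0\<^sub>m d d"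
proof -
  have len: "length es = d" using es T unfolding diag_mat_def by auto
  let ?L = "meval (prod_list (map lin es)) T"
  have L: "?L \<in> carrier_mat d d" using T by simp
  have z: "?L *\<^sub>v unit_vec d j = 0\<^sub>v d" for j
    using ut_annihil_aux[OF T ut es, of d "unit_vec d j"] len by auto
  show ?thesis
  proof (rule eq_matI)
    fix i j assume i: "i < dim_row (0\<^sub>m d d)" and j: "j < dim_col (0\<^sub>m d d)"
    have "?L $$ (i,j) = (?L *\<^sub>v unit_vec d j) $ i"
      using L i j by (simp add: mult_mat_vec_def scalar_prod_def unit_vec_def if_distrib cong: if_cong)
    then show "?L $$ (i,j) = 0\<^sub>m d d $$ (i,j)" using z i j by simp
  qed (use L in auto)
qed

lemma meval_similar: fixes B T P Q :: "complex mat"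
  assumes T: "T \<in> carrier_mat d d" and P: "P \<in> carrier_mat d d" and Q: "Q \<in> carrier_mat d d"
    and PQ: "P * Q = 1\<^sub>m d" and QP: "Q * P = 1\<^sub>m d" and BT: "B = P * T * Q"
  shows "meval p B = P * meval p T * Q"
proof (induct p)
  case 0
  have B: "B \<in> carrier_mat d d" using BT T P Q by auto
  then show ?case using T P Q B by simp
next
  case (pCons a p)
  have B: "B \<in> carrier_mat d d" using BT T P Q by auto
  let ?M = "meval p T"
  have M: "?M \<in> carrier_mat d d" using T by simp
  have "meval (pCons a p) B = a \<cdot>\<^sub>m 1\<^sub>m d + B * meval p B" by (rule meval_pCons[OF B])
  also have "\<dots> = a \<cdot>\<^sub>m 1\<^sub>m d + (P * T * Q) * (P * ?M * Q)"
    using pCons BT by simp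
  also have "(P * T * Q) * (P * ?M * Q) = P * (T * ?M) * Q"
  proof -
    have "(P * T * Q) * (P * ?M * Q) = P * T * (Q * P) * ?M * Q"
      using P T Q M by (simp add: sq_assoc)
    also have "\<dots> = P * (T * ?M) * Q" using QP P T Q M by (simp add: sq_assoc)
    finally show ?thesis .
  qed
  also have "a \<cdot>\<^sub>m 1\<^sub>m d = P * (a \<cdot>\<^sub>m 1\<^sub>m d) * Q"
  proof -
    have "P * (a \<cdot>\<^sub>m 1\<^sub>m d) = a \<cdot>\<^sub>m (P * 1\<^sub>m d)" by (rule mult_smult_distrib[OF P]) (rule one_carrier_mat)
    also have "\<dots> = a \<cdot>\<^sub>m P" using P by simp
    finally have "P * (a \<cdot>\<^sub>m 1\<^sub>m d) * Q = (a \<cdot>\<^sub>m P) * Q" by simp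
    also have "\<dots> = a \<cdot>\<^sub>m (P * Q)" by (rule mult_smult_assoc_mat[OF P Q])
    finally show ?thesis using PQ by simp
  qed
  also have "P * (a \<cdot>\<^sub>m 1\<^sub>m d) * Q + P * (T * ?M) * Q = P * (a \<cdot>\<^sub>m 1\<^sub>m d + T * ?M) * Q"
    using P Q T M by (simp add: sq_distL[of P d] sq_distR[of _ d])
  finally show ?case by (simp add: meval_pCons[OF T])
qed

lemma annihil: fixes B :: "complex mat" assumes Bc: "B \<in> carrier_mat d d"
  shows "\<exists>es. (\<forall>e. eigenvalue B e \<longleftrightarrow> e \<in> set es) \<and> meval (prod_list (map lin es)) B = 0\<^sub>m d d"
proof -
  obtain es where cp: "char_poly B = (\<Prod>a\<leftarrow>es. [:- a, 1:])" using char_poly_factorized[OF Bc] by blast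
  obtain T P Q where sd: "schur_decomposition B es = (T,P,Q)" by (cases "schur_decomposition B es") auto
  from schur_decomposition[OF Bc cp sd] have sw: "similar_mat_wit B T P Q" and ut: "upper_triangular T"
    and dg: "diag_mat T = es" by auto
  from sw Bc have T: "T \<in> carrier_mat d d" and P: "P \<in> carrier_mat d d" and Q: "Q \<in> carrier_mat d d"
    and PQ: "P * Q = 1\<^sub>m d" and QP: "Q * P = 1\<^sub>m d" and BT: "B = P * T * Q"
    unfolding similar_mat_wit_def Let_def by auto
  have "meval (prod_list (map lin es)) B = P * meval (prod_list (map lin es)) T * Q"
    by (rule meval_similar[OF T P Q PQ QP BT])
  also have "\<dots> = 0\<^sub>m d d" using ut_annihil[OF T ut dg] P Q by simp
  finally have z: "meval (prod_list (map lin es)) B = 0\<^sub>m d d" .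
  have "eigenvalue B e \<longleftrightarrow> e \<in> set es" for e
  proof -
    have "poly (char_poly B) e = 0 \<longleftrightarrow> e \<in> set es" unfolding cp
      by (auto simp: poly_prod_list prod_list_zero_iff)
    then show ?thesis using eigenvalue_root_char_poly[OF Bc] by simp
  qed
  with z show ?thesis by blast
qed




definition bez :: "complex poly \<Rightarrow> complex poly \<Rightarrow> bool" where
  "bez a b \<longleftrightarrow> (\<exists>u v. u * a + v * b = 1)"

lemma bez_sym: "bez a b \<Longrightarrow> bez b a"
  unfolding bez_def by (metis add.commute)

lemma bez_one: "bez a 1"
  unfolding bez_def by (rule exI[of _ 0], rule exI[of _ 1]) simp

lemma bez_mult: assumes "bez a b" "bez a c" shows "bez a (b * c)"
proof -
  from assms obtain u1 v1 u2 v2 where 1: "u1 * a + v1 * b = 1" and 2: "u2 * a + v2 * c = 1"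
    unfolding bez_def by blast
  have "(u1 * a + v1 * b) * (u2 * a + v2 * c) = 1" using 1 2 by simp
  then have "(u1 * u2 * a + u1 * v2 * c + v1 * b * u2) * a + (v1 * v2) * (b * c) = 1"
    by (simp add: algebra_simps)
  then show ?thesis unfolding bez_def by blast
qed

lemma bez_pow: assumes "bez a b" shows "bez a (b ^ k)"
  by (induct k) (auto simp: bez_one bez_mult assms)

lemma bez_prod: assumes "finite S" "\<forall>x\<in>S. bez a (g x)" shows "bez a (\<Prod>x\<in>S. g x)"
  using assms by (induct S rule: finite_induct) (auto simp: bez_one bez_mult)

lemma bez_lin: assumes "c \<noteq> e" shows "bez (lin c) (lin e)"
proof -
  let ?k = "1 / (e - c)"
  have d: "lin c - lin e = [:e - c:]" by (simp add: lin_def)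
  have "[:?k:] * lin c + [:- ?k:] * lin e = [:?k:] * (lin c - lin e)" by (simp add: smult_diff_right)
  also have "\<dots> = [:?k * (e - c):]" unfolding d by simp
  finally have "[:?k:] * lin c + [:- ?k:] * lin e = [:?k * (e - c):]" .
  also have "?k * (e - c) = 1" using assms by simp
  finally have "[:?k:] * lin c + [:- ?k:] * lin e = 1" by (simp add: one_pCons)
  then show ?thesis unfolding bez_def by blast
qed

lemma bez_family:
  assumes "finite S" "S \<noteq> {}" "\<forall>x\<in>S. \<forall>y\<in>S. x \<noteq> y \<longrightarrow> bez (h x) (h y)"
  shows "\<exists>a. (\<Sum>c\<in>S. a c * (\<Prod>c'\<in>S - {c}. h c')) = 1"
  using assms
proof (induct S rule: finite_ne_induct)
  case (singleton x)
  show ?case by (rule exI[of _ "\<lambda>_. 1"]) simp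
next
  case (insert x S)
  then obtain a where a: "(\<Sum>c\<in>S. a c * (\<Prod>c'\<in>S - {c}. h c')) = 1" by auto
  have "bez (h x) (\<Prod>c\<in>S. h c)" using insert by (intro bez_prod) auto
  then obtain u v where uv: "u * h x + v * (\<Prod>c\<in>S. h c) = 1" unfolding bez_def by blast
  define a' where "a' c = (if c = x then v else u * a c)" for c
  have G: "(\<Prod>c'\<in>insert x S - {c}. h c') = h x * (\<Prod>c'\<in>S - {c}. h c')" if "c \<in> S" for c
  proof -
    have "insert x S - {c} = insert x (S - {c})" using that insert by auto
    then show ?thesis using insert by simp
  qed
  have Gx: "insert x S - {x} = S" using insert by auto
  have "(\<Sum>c\<in>insert x S. a' c * (\<Prod>c'\<in>insert x S - {c}. h c'))
     = v * (\<Prod>c\<in>S. h c) + (\<Sum>c\<in>S. u * a c * (h x * (\<Prod>c'\<in>S - {c}. h c')))"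
    using insert G by (simp add: Gx a'_def) (intro sum.cong refl, use insert in auto)
  also have "(\<Sum>c\<in>S. u * a c * (h x * (\<Prod>c'\<in>S - {c}. h c'))) = u * h x * (\<Sum>c\<in>S. a c * (\<Prod>c'\<in>S - {c}. h c'))"
    by (simp add: sum_distrib_left mult_ac)
  finally show ?case using a uv by (intro exI[of _ a']) (simp add: add.commute)
qed

lemma meval_sum_entry: assumes B: "B \<in> carrier_mat d d" and S: "finite S" and i: "i < d" and j: "j < d"
  shows "meval (\<Sum>c\<in>S. p c) B $$ (i,j) = (\<Sum>c\<in>S. meval (p c) B $$ (i,j))"
  using S by (induct S rule: finite_induct) (use B i j in \<open>auto simp: meval_add[OF B]\<close>)

lemma meval_zero_factor: assumes B: "B \<in> carrier_mat d d" and f: "meval f B = 0\<^sub>m d d"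
  shows "meval (f * r) B = 0\<^sub>m d d" "meval (r * f) B = 0\<^sub>m d d"
  using B f by (auto simp: meval_mult[OF B])

lemma projections: fixes B :: "complex mat" assumes B: "B \<in> carrier_mat d d"
  shows "\<exists>P. (\<forall>c\<in>{c. eigenvalue B c}. P c \<in> carrier_mat d d \<and> P c * P c = P c
      \<and> (\<exists>m. (B - c \<cdot>\<^sub>m 1\<^sub>m d) ^\<^sub>m m * P c = 0\<^sub>m d d) \<and> (\<exists>q. P c = meval q B))
    \<and> (\<forall>i<d. \<forall>j<d. (\<Sum>c\<in>{c. eigenvalue B c}. P c $$ (i,j)) = (if i = j then 1 else 0))
    \<and> finite {c. eigenvalue B c}"
proof -
  obtain es where ev: "\<And>e. eigenvalue B e \<longleftrightarrow> e \<in> set es" and f0: "meval (prod_list (map lin es)) B = 0\<^sub>m d d"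
    using annihil[OF B] by blast
  define E where "E = set es"
  have EE: "{c. eigenvalue B c} = E" unfolding E_def using ev by auto
  have finE: "finite E" unfolding E_def by simp
  define h where "h c = lin c ^ count (mset es) c" for c
  define f where "f = prod_list (map lin es)"
  have fh: "f = (\<Prod>c\<in>E. h c)"
  proof -
    have "f = prod_mset (image_mset lin (mset es))" unfolding f_def
      by (metis mset_map prod_mset_prod_list)
    also have "\<dots> = (\<Prod>c\<in>E. h c)" unfolding image_prod_mset_multiplicity h_def E_def by simp
    finally show ?thesis .
  qed
  have F0: "meval (f * r) B = 0\<^sub>m d d" for r using meval_zero_factor[OF B f0] unfolding f_def by simp
  show ?thesis
  proof (cases "E = {}")
    case True
    then have "es = []" unfolding E_def by simp
    then have "1\<^sub>m d = (0\<^sub>m d d :: complex mat)" using f0 B by simp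
    then have "d = 0" by (metis index_one_mat(1) index_zero_mat(1) neq0_conv zero_neq_one)
    then show ?thesis unfolding EE using True by (intro exI[of _ "\<lambda>_. 1\<^sub>m d"]) auto
  next
    case False
    have "\<forall>x\<in>E. \<forall>y\<in>E. x \<noteq> y \<longrightarrow> bez (h x) (h y)"
      unfolding h_def by (metis bez_lin bez_pow bez_sym)
    from bez_family[OF finE False this] obtain a where
      a: "(\<Sum>c\<in>E. a c * (\<Prod>c'\<in>E - {c}. h c')) = 1" by blast
    define g where "g c = (\<Prod>c'\<in>E - {c}. h c')" for c
    define P where "P c = meval (a c * g c) B" for c
    have fg: "f = h c * g c" if "c \<in> E" for c
      unfolding fh g_def using finE that by (simp add: prod.remove)
    have Pc: "P c \<in> carrier_mat d d" for c unfolding P_def using B by simp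
    have hdvd: "h c dvd g c'" if "c \<in> E" "c' \<noteq> c" for c c'
      unfolding g_def using that finE by (intro dvd_prodI) auto
    have idem: "P c * P c = P c" if c: "c \<in> E" for c
    proof -
      have "f dvd a c * g c * (\<Sum>c'\<in>E - {c}. a c' * g c')"
      proof -
        have "f dvd g c * g c'" if c'E: "c' \<in> E - {c}" for c'
        proof -
          have "h c dvd g c'" using hdvd[OF c, of c'] c'E by auto
          then obtain r where "g c' = h c * r" by (auto elim: dvdE)
          then have "g c * g c' = f * r" using fg[OF c] by (simp add: mult_ac)
          then show ?thesis by simp
        qed
        then have "f dvd (\<Sum>c'\<in>E - {c}. a c * g c * (a c' * g c'))"
          by (intro dvd_sum) (metis dvd_mult dvd_mult2 mult.assoc mult.left_commute)
        then show ?thesis by (simp add: sum_distrib_left)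
      qed
      then obtain r where r: "a c * g c * (\<Sum>c'\<in>E - {c}. a c' * g c') = f * r" by (auto elim: dvdE)
      have "(\<Sum>c'\<in>E. a c' * g c') = a c * g c + (\<Sum>c'\<in>E - {c}. a c' * g c')"
        using finE c by (simp add: sum.remove)
      then have "a c * g c + (\<Sum>c'\<in>E - {c}. a c' * g c') = 1" using a unfolding g_def by simp
      then have "a c * g c * (a c * g c + (\<Sum>c'\<in>E - {c}. a c' * g c')) = a c * g c" by simp
      then have eq: "(a c * g c) * (a c * g c) + f * r = a c * g c" using r by (simp add: distrib_left)
      have e2: "meval (a c * g c * (a c * g c) + f * r) B = meval (a c * g c * (a c * g c)) B + 0\<^sub>m d d"
        by (simp only: meval_add[OF B] F0)
      have e3: "meval (a c * g c * (a c * g c)) B = P c * P c" unfolding P_def by (rule meval_mult[OF B])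
      have "P c * P c + 0\<^sub>m d d = P c"
        using arg_cong[OF eq, of "\<lambda>p. meval p B"] e2 e3 unfolding P_def by simp
      then show ?thesis using Pc by simp
    qed
    have nil: "(B - c \<cdot>\<^sub>m 1\<^sub>m d) ^\<^sub>m count (mset es) c * P c = 0\<^sub>m d d" if c: "c \<in> E" for c
    proof -
      have "(B - c \<cdot>\<^sub>m 1\<^sub>m d) ^\<^sub>m count (mset es) c = meval (h c) B"
        unfolding h_def by (simp add: meval_power[OF B] meval_lin[OF B] lin_def)
      then have "(B - c \<cdot>\<^sub>m 1\<^sub>m d) ^\<^sub>m count (mset es) c * P c = meval (h c * (a c * g c)) B"
        unfolding P_def by (simp add: meval_mult[OF B])
      also have "h c * (a c * g c) = f * a c" using fg[OF c] by (simp add: mult_ac)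
      finally show ?thesis using F0 by simp
    qed
    have sum: "(\<Sum>c\<in>E. P c $$ (i,j)) = (if i = j then 1 else 0)" if "i < d" "j < d" for i j
    proof -
      have "(\<Sum>c\<in>E. P c $$ (i,j)) = meval (\<Sum>c\<in>E. a c * g c) B $$ (i,j)"
        unfolding P_def using meval_sum_entry[OF B finE that] by simp
      also have "(\<Sum>c\<in>E. a c * g c) = 1" using a unfolding g_def .
      finally show ?thesis using that B by simp
    qed
    show ?thesis unfolding EE
      by (intro exI[of _ P] conjI ballI allI impI finE sum) (use Pc idem nil P_def in auto)
  qed
qed




definition op_at :: "nat \<Rightarrow> complex mat \<Rightarrow> nat \<Rightarrow> nat \<Rightarrow> ((nat \<Rightarrow> nat) \<Rightarrow> complex) \<Rightarrow> ((nat \<Rightarrow> nat) \<Rightarrow> complex)" where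
  "op_at k Y n d \<psi> = (\<lambda>i. if i \<in> idx n d then (\<Sum>j<d. Y $$ (i k, j) * \<psi> (i(k := j))) else 0)"

lemma op_first_at: "op_first Y n d = op_at 0 Y n d"
  unfolding op_first_def op_at_def by (rule ext) simp

lemma idx_upd: "i \<in> idx n d \<Longrightarrow> k < n \<Longrightarrow> j < d \<Longrightarrow> i(k := j) \<in> idx n d"
  unfolding idx_def by auto

lemma idx_lt: "i \<in> idx n d \<Longrightarrow> k < n \<Longrightarrow> i k < d"
  unfolding idx_def by auto

lemma op_at_tensor: "op_at k Y n d \<psi> \<in> tensor_space n d"
  unfolding op_at_def tensor_space_def by auto

lemma op_at_mult: assumes X: "X \<in> carrier_mat d d" and Y: "Y \<in> carrier_mat d d" and k: "k < n"
  shows "op_at k (X * Y) n d \<psi> = op_at k X n d (op_at k Y n d \<psi>)"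
proof (rule ext)
  fix i
  show "op_at k (X * Y) n d \<psi> i = op_at k X n d (op_at k Y n d \<psi>) i"
  proof (cases "i \<in> idx n d")
    case False then show ?thesis unfolding op_at_def by simp
  next
    case True
    have ik: "i k < d" using idx_lt[OF True k] .
    have "op_at k X n d (op_at k Y n d \<psi>) i = (\<Sum>j<d. X $$ (i k, j) * (\<Sum>l<d. Y $$ (j, l) * \<psi> (i(k := l))))"
      unfolding op_at_def using True idx_upd[OF True k] by simp
    also have "\<dots> = (\<Sum>j<d. \<Sum>l<d. X $$ (i k, j) * Y $$ (j, l) * \<psi> (i(k := l)))"
      by (simp add: sum_distrib_left mult_ac)
    also have "\<dots> = (\<Sum>l<d. \<Sum>j<d. X $$ (i k, j) * Y $$ (j, l) * \<psi> (i(k := l)))"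
      by (rule sum.swap)
    also have "\<dots> = (\<Sum>l<d. (X * Y) $$ (i k, l) * \<psi> (i(k := l)))"
      using X Y ik by (auto simp: scalar_prod_def sum_distrib_right atLeast0LessThan intro!: sum.cong)
    finally show ?thesis unfolding op_at_def using True by simp
  qed
qed

lemma op_at_one: assumes "\<psi> \<in> tensor_space n d" and k: "k < n"
  shows "op_at k (1\<^sub>m d) n d \<psi> = \<psi>"
proof (rule ext)
  fix i
  show "op_at k (1\<^sub>m d) n d \<psi> i = \<psi> i"
  proof (cases "i \<in> idx n d")
    case False then show ?thesis using assms unfolding op_at_def tensor_space_def by simp
  next
    case True
    have ik: "i k < d" using idx_lt[OF True k] .
    have "(\<Sum>j<d. 1\<^sub>m d $$ (i k, j) * \<psi> (i(k := j))) = (\<Sum>j<d. if j = i k then \<psi> (i(k := j)) else 0)"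
      using ik by (intro sum.cong) auto
    also have "\<dots> = \<psi> i" using ik by simp
    finally show ?thesis unfolding op_at_def using True by simp
  qed
qed

lemma op_at_smult_one: assumes k: "k < n"
  shows "op_at k (a \<cdot>\<^sub>m 1\<^sub>m d) n d \<psi> = (\<lambda>i. if i \<in> idx n d then a * \<psi> i else 0)"
proof (rule ext)
  fix i
  show "op_at k (a \<cdot>\<^sub>m 1\<^sub>m d) n d \<psi> i = (if i \<in> idx n d then a * \<psi> i else 0)"
  proof (cases "i \<in> idx n d")
    case False then show ?thesis unfolding op_at_def by simp
  next
    case True
    have ik: "i k < d" using idx_lt[OF True k] .
    have "(\<Sum>j<d. (a \<cdot>\<^sub>m 1\<^sub>m d) $$ (i k, j) * \<psi> (i(k := j))) = (\<Sum>j<d. if j = i k then a * \<psi> (i(k := j)) else 0)"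
      using ik by (intro sum.cong) auto
    also have "\<dots> = a * \<psi> i" using ik by simp
    finally show ?thesis unfolding op_at_def using True by simp
  qed
qed

lemma op_at_add: assumes X: "X \<in> carrier_mat d d" and Y: "Y \<in> carrier_mat d d" and k: "k < n"
  shows "op_at k (X + Y) n d \<psi> = (\<lambda>i. op_at k X n d \<psi> i + op_at k Y n d \<psi> i)"
proof (rule ext)
  fix i
  show "op_at k (X + Y) n d \<psi> i = op_at k X n d \<psi> i + op_at k Y n d \<psi> i"
  proof (cases "i \<in> idx n d")
    case False then show ?thesis unfolding op_at_def by simp
  next
    case True
    have ik: "i k < d" using idx_lt[OF True k] .
    show ?thesis unfolding op_at_def using True X Y ik by (simp add: sum.distrib distrib_right)
  qed
qed

lemma op_at_zero: "k < n \<Longrightarrow> op_at k (0\<^sub>m d d) n d \<psi> = (\<lambda>i. 0)"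
  unfolding op_at_def by (rule ext) (auto intro!: sum.neutral simp: idx_lt)

lemma op_at_comm: assumes kl: "k \<noteq> l" and k: "k < n" and l: "l < n"
  shows "op_at k X n d (op_at l Y n d \<psi>) = op_at l Y n d (op_at k X n d \<psi>)"
proof (rule ext)
  fix i
  show "op_at k X n d (op_at l Y n d \<psi>) i = op_at l Y n d (op_at k X n d \<psi>) i"
  proof (cases "i \<in> idx n d")
    case False then show ?thesis unfolding op_at_def by simp
  next
    case True
    have "op_at k X n d (op_at l Y n d \<psi>) i = (\<Sum>j<d. X $$ (i k, j) * (\<Sum>m<d. Y $$ (i l, m) * \<psi> (i(k := j, l := m))))"
      unfolding op_at_def using True idx_upd[OF True k] kl by simp
    also have "\<dots> = (\<Sum>j<d. \<Sum>m<d. X $$ (i k, j) * Y $$ (i l, m) * \<psi> (i(k := j, l := m)))"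
      by (simp add: sum_distrib_left mult_ac)
    also have "\<dots> = (\<Sum>m<d. \<Sum>j<d. X $$ (i k, j) * Y $$ (i l, m) * \<psi> (i(k := j, l := m)))"
      by (rule sum.swap)
    also have "\<dots> = (\<Sum>m<d. Y $$ (i l, m) * (\<Sum>j<d. X $$ (i k, j) * \<psi> (i(l := m, k := j))))"
      using kl by (simp add: sum_distrib_left mult_ac fun_upd_twist)
    also have "\<dots> = op_at l Y n d (op_at k X n d \<psi>) i"
      unfolding op_at_def using True idx_upd[OF True l] kl by simp
    finally show ?thesis .
  qed
qed




lemma idx_perm: assumes s: "\<sigma> permutes {..<n}" and i: "i \<in> idx n d" shows "i \<circ> \<sigma> \<in> idx n d"
  using i permutes_in_image[OF s] permutes_not_in[OF s] unfolding idx_def by auto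

lemma sym_shift: assumes psi: "\<psi> \<in> sym_space n d" and s: "\<sigma> permutes {..<n}" and i: "i \<in> idx n d"
  and n: "0 < n"
  shows "op_at 0 Y n d \<psi> (i \<circ> \<sigma>) = op_at (\<sigma> 0) Y n d \<psi> i"
proof -
  have s0: "\<sigma> 0 < n" using permutes_in_image[OF s] n by auto
  have "op_at 0 Y n d \<psi> (i \<circ> \<sigma>) = (\<Sum>j<d. Y $$ (i (\<sigma> 0), j) * \<psi> ((i \<circ> \<sigma>)(0 := j)))"
    unfolding op_at_def using idx_perm[OF s i] by simp
  also have "\<dots> = (\<Sum>j<d. Y $$ (i (\<sigma> 0), j) * \<psi> (i(\<sigma> 0 := j)))"
  proof (intro sum.cong refl)
    fix j assume j: "j \<in> {..<d}"
    have eq: "(i \<circ> \<sigma>)(0 := j) = (i(\<sigma> 0 := j)) \<circ> \<sigma>"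
      using permutes_inj[OF s] by (auto simp: fun_eq_iff inj_eq)
    have "\<psi> ((i(\<sigma> 0 := j)) \<circ> \<sigma>) = \<psi> (i(\<sigma> 0 := j))"
      using psi s idx_upd[OF i s0] j unfolding sym_space_def by auto
    then show "Y $$ (i (\<sigma> 0), j) * \<psi> ((i \<circ> \<sigma>)(0 := j)) = Y $$ (i (\<sigma> 0), j) * \<psi> (i(\<sigma> 0 := j))"
      using eq by simp
  qed
  also have "\<dots> = op_at (\<sigma> 0) Y n d \<psi> i" unfolding op_at_def using i by simp
  finally show ?thesis .
qed

lemma op_at_sym: assumes psi: "\<psi> \<in> sym_space n d" and B: "op_at 0 Y n d \<psi> \<in> sym_space n d"
  and k: "k < n"
  shows "op_at k Y n d \<psi> = op_at 0 Y n d \<psi>"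
proof (rule ext)
  fix i
  show "op_at k Y n d \<psi> i = op_at 0 Y n d \<psi> i"
  proof (cases "i \<in> idx n d")
    case False then show ?thesis unfolding op_at_def by simp
  next
    case True
    let ?s = "transpose 0 k"
    have s: "?s permutes {..<n}" using k by (intro permutes_swap_id) auto
    have "op_at k Y n d \<psi> i = op_at 0 Y n d \<psi> (i \<circ> ?s)"
      using sym_shift[OF psi s True] k by simp
    also have "\<dots> = op_at 0 Y n d \<psi> i" using B s True unfolding sym_space_def by auto
    finally show ?thesis .
  qed
qed

lemma shift_sym: assumes psi: "\<psi> \<in> sym_space n d" and n: "0 < n"
  and all: "\<forall>k<n. op_at k Y n d \<psi> = op_at 0 Y n d \<psi>"
  shows "op_at 0 Y n d \<psi> \<in> sym_space n d"
proof -
  have "op_at 0 Y n d \<psi> (i \<circ> \<sigma>) = op_at 0 Y n d \<psi> i"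
    if s: "\<sigma> permutes {..<n}" and i: "i \<in> idx n d" for \<sigma> i
  proof -
    have "\<sigma> 0 < n" using permutes_in_image[OF s] n by auto
    then have "op_at (\<sigma> 0) Y n d \<psi> = op_at 0 Y n d \<psi>" using all by blast
    then show ?thesis using sym_shift[OF psi s i n] by simp
  qed
  then show ?thesis unfolding sym_space_def using op_at_tensor by blast
qed

lemma meval_transfer: assumes B: "B \<in> carrier_mat d d" and k: "k < n" and n: "0 < n"
  and hk: "op_at k B n d \<psi> = op_at 0 B n d \<psi>"
  shows "op_at k (meval p B) n d \<psi> = op_at 0 (meval p B) n d \<psi>"
proof (cases "k = 0")
  case True then show ?thesis by simp
next
  case False
  show ?thesis
  proof (induct p)
    case 0 then show ?case using B k n by (simp add: op_at_zero)
  next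
    case (pCons a p)
    let ?M = "meval p B"
    have M: "?M \<in> carrier_mat d d" using B by simp
    have "op_at k (B * ?M) n d \<psi> = op_at 0 (B * ?M) n d \<psi>"
    proof -
      have "op_at k (B * ?M) n d \<psi> = op_at k B n d (op_at k ?M n d \<psi>)" by (rule op_at_mult[OF B M k])
      also have "\<dots> = op_at k B n d (op_at 0 ?M n d \<psi>)" using pCons by simp
      also have "\<dots> = op_at 0 ?M n d (op_at k B n d \<psi>)" by (rule op_at_comm[OF False k n])
      also have "\<dots> = op_at 0 ?M n d (op_at 0 B n d \<psi>)" using hk by simp
      also have "\<dots> = op_at 0 (?M * B) n d \<psi>" by (rule op_at_mult[OF M B n, symmetric])
      also have "?M * B = B * ?M" using meval_comm[OF B, of p "[:0,1:]"] meval_X[OF B] by simp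
      finally show ?thesis .
    qed
    have c1: "a \<cdot>\<^sub>m 1\<^sub>m d \<in> carrier_mat d d" "B * ?M \<in> carrier_mat d d" using B M by auto
    show ?case unfolding meval_pCons[OF B] op_at_add[OF c1 k] op_at_add[OF c1 n]
      op_at_smult_one[OF k] op_at_smult_one[OF n] using \<open>op_at k (B * ?M) n d \<psi> = _\<close> by simp
  qed
qed




definition Gs :: "nat \<Rightarrow> nat \<Rightarrow> nat \<Rightarrow> complex vec set \<Rightarrow> ((nat \<Rightarrow> nat) \<Rightarrow> complex) set" where
  "Gs n d m V = {\<phi>. \<exists>(M::nat) (c :: nat \<Rightarrow> complex) (vs :: nat \<Rightarrow> nat \<Rightarrow> complex vec).
      (\<forall>t<M. \<forall>k<n. vs t k \<in> carrier_vec d \<and> (k < m \<longrightarrow> vs t k \<in> V)) \<and> \<phi> = (\<lambda>i. \<Sum>t<M. c t * prod_tensor n d (vs t) i)}"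

lemma Gs_n: "Gs n d n V \<subseteq> tensor_power n d V"
  unfolding Gs_def tensor_power_def by blast

lemma finite_idx: "finite (idx n d)"
proof -
  have "idx n d \<subseteq> (\<lambda>f k. if k < n then f k else 0) ` ({..<n} \<rightarrow>\<^sub>E {..<d})"
  proof
    fix i assume i: "i \<in> idx n d"
    have "i = (\<lambda>k. if k < n then restrict i {..<n} k else 0)" using i unfolding idx_def by (auto simp: fun_eq_iff)
    moreover have "restrict i {..<n} \<in> {..<n} \<rightarrow>\<^sub>E {..<d}" using i unfolding idx_def by auto
    ultimately show "i \<in> (\<lambda>f k. if k < n then f k else 0) ` ({..<n} \<rightarrow>\<^sub>E {..<d})" by blast
  qed
  then show ?thesis by (rule finite_subset) (intro finite_imageI finite_PiE, auto)
qed

lemma prod_tensor_unit: assumes j: "j \<in> idx n d"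
  shows "prod_tensor n d (\<lambda>k. unit_vec d (j k)) i = (if i = j then 1 else 0)"
proof (cases "i \<in> idx n d")
  case False then show ?thesis using j unfolding prod_tensor_def by auto
next
  case True
  have "(\<Prod>k<n. unit_vec d (j k) $ i k) = (\<Prod>k<n. if i k = j k then (1::complex) else 0)"
    using True unfolding idx_def by (intro prod.cong) (auto simp: unit_vec_def)
  also have "\<dots> = (if \<forall>k<n. i k = j k then 1 else 0)"
    by (induct n) (auto simp: less_Suc_eq)
  also have "(\<forall>k<n. i k = j k) \<longleftrightarrow> i = j"
    using True j unfolding idx_def by (auto simp: fun_eq_iff) (metis not_le)
  finally show ?thesis unfolding prod_tensor_def using True by simp
qed

lemma Gs_0: assumes psi: "\<psi> \<in> tensor_space n d" shows "\<psi> \<in> Gs n d 0 V"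
proof -
  obtain g where g: "bij_betw g {0..<card (idx n d)} (idx n d)"
    using ex_bij_betw_nat_finite[OF finite_idx] by blast
  define M where "M = card (idx n d)"
  have gM: "bij_betw g {..<M} (idx n d)" using g unfolding M_def by (simp add: atLeast0LessThan)
  have gin: "g t \<in> idx n d" if "t < M" for t using gM that unfolding bij_betw_def by auto
  have "\<psi> = (\<lambda>i. \<Sum>t<M. \<psi> (g t) * prod_tensor n d (\<lambda>k. unit_vec d (g t k)) i)"
  proof (rule ext)
    fix i
    have "(\<Sum>t<M. \<psi> (g t) * prod_tensor n d (\<lambda>k. unit_vec d (g t k)) i)
        = (\<Sum>t<M. \<psi> (g t) * (if i = g t then 1 else 0))"
      using gin by (intro sum.cong refl) (simp add: prod_tensor_unit)
    also have "\<dots> = (\<Sum>j\<in>idx n d. \<psi> j * (if i = j then 1 else 0))"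
      by (rule sum.reindex_bij_betw[OF gM])
    also have "\<dots> = \<psi> i"
      using psi finite_idx unfolding tensor_space_def by (auto simp: if_distrib cong: if_cong)
    finally show "\<psi> i = (\<Sum>t<M. \<psi> (g t) * prod_tensor n d (\<lambda>k. unit_vec d (g t k)) i)" by simp
  qed
  then show ?thesis unfolding Gs_def by (intro CollectI exI[of _ M] exI[of _ "\<lambda>t. \<psi> (g t)"]
      exI[of _ "\<lambda>t k. unit_vec d (g t k)"]) auto
qed

lemma op_at_prod_tensor: assumes P: "P \<in> carrier_mat d d" and m: "m < n"
  and vs: "\<forall>k<n. vs k \<in> carrier_vec d"
  shows "op_at m P n d (prod_tensor n d vs) = prod_tensor n d (vs(m := P *\<^sub>v vs m))"
proof (rule ext)
  fix i
  show "op_at m P n d (prod_tensor n d vs) i = prod_tensor n d (vs(m := P *\<^sub>v vs m)) i"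
  proof (cases "i \<in> idx n d")
    case False then show ?thesis unfolding op_at_def prod_tensor_def by simp
  next
    case True
    have im: "i m < d" using idx_lt[OF True m] .
    let ?R = "\<Prod>k\<in>{..<n} - {m}. vs k $ i k"
    have split: "(\<Prod>k<n. f k) = f m * (\<Prod>k\<in>{..<n} - {m}. f k)" for f :: "nat \<Rightarrow> complex"
      using m by (subst prod.remove[of _ m]) auto
    have pj: "(\<Prod>k<n. vs k $ (i(m := j)) k) = vs m $ j * ?R" for j
      by (subst split) (auto intro!: prod.cong)
    have "op_at m P n d (prod_tensor n d vs) i = (\<Sum>j<d. P $$ (i m, j) * (\<Prod>k<n. vs k $ (i(m := j)) k))"
      unfolding op_at_def prod_tensor_def using True idx_upd[OF True m] by simp
    also have "\<dots> = (\<Sum>j<d. P $$ (i m, j) * (vs m $ j * ?R))" by (simp only: pj)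
    also have "\<dots> = (P *\<^sub>v vs m) $ i m * ?R"
    proof -
      have vm: "vs m \<in> carrier_vec d" using vs m by auto
      have "(P *\<^sub>v vs m) $ i m = (\<Sum>j<d. P $$ (i m, j) * vs m $ j)"
        using P vm im by (auto simp: mult_mat_vec_def scalar_prod_def atLeast0LessThan intro!: sum.cong)
      then show ?thesis by (simp add: sum_distrib_left sum_distrib_right mult_ac)
    qed
    also have "\<dots> = prod_tensor n d (vs(m := P *\<^sub>v vs m)) i"
      unfolding prod_tensor_def using True by (simp add: split)
    finally show ?thesis .
  qed
qed

lemma op_at_lin: "op_at m P n d (\<lambda>i. \<Sum>t<M. c t * F t i) = (\<lambda>i. \<Sum>t<M. c t * op_at m P n d (F t) i)"
  unfolding op_at_def by (rule ext) (auto simp: sum_distrib_left mult_ac intro: sum.swap)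

lemma Gs_step: assumes P: "P \<in> carrier_mat d d" and m: "m < n"
  and PV: "\<forall>v\<in>carrier_vec d. P *\<^sub>v v \<in> V" and phi: "\<phi> \<in> Gs n d m V"
  shows "op_at m P n d \<phi> \<in> Gs n d (Suc m) V"
proof -
  from phi obtain M and c :: "nat \<Rightarrow> complex" and vs :: "nat \<Rightarrow> nat \<Rightarrow> complex vec" where vs: "\<forall>t<M. \<forall>k<n. vs t k \<in> carrier_vec d \<and> (k < m \<longrightarrow> vs t k \<in> V)"
    and ph: "\<phi> = (\<lambda>i. \<Sum>t<M. c t * prod_tensor n d (vs t) i)" unfolding Gs_def by blast
  define vs' where "vs' t = (vs t)(m := P *\<^sub>v vs t m)" for t
  have "op_at m P n d \<phi> = (\<lambda>i. \<Sum>t<M. c t * op_at m P n d (prod_tensor n d (vs t)) i)"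
    unfolding ph by (rule op_at_lin)
  also have "\<dots> = (\<lambda>i. \<Sum>t<M. c t * prod_tensor n d (vs' t) i)"
    unfolding vs'_def using vs by (intro ext sum.cong refl) (simp add: op_at_prod_tensor[OF P m])
  finally have eq: "op_at m P n d \<phi> = (\<lambda>i. \<Sum>t<M. c t * prod_tensor n d (vs' t) i)" .
  have "\<forall>t<M. \<forall>k<n. vs' t k \<in> carrier_vec d \<and> (k < Suc m \<longrightarrow> vs' t k \<in> V)"
    unfolding vs'_def using vs P PV m by (auto simp: less_Suc_eq)
  then show ?thesis unfolding Gs_def using eq by blast
qed




lemma iter_power: assumes P: "P \<in> carrier_mat d d" and psi: "\<psi> \<in> tensor_space n d"
  and idem: "P * P = P" and tr: "\<forall>k<n. op_at k P n d \<psi> = op_at 0 P n d \<psi>" and n: "0 < n"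
  and PV: "\<forall>v\<in>carrier_vec d. P *\<^sub>v v \<in> V"
  shows "op_at 0 P n d \<psi> \<in> tensor_power n d V"
proof -
  have "1 \<le> m \<Longrightarrow> m \<le> n \<Longrightarrow> op_at 0 P n d \<psi> \<in> Gs n d m V" for m
  proof (induct m)
    case 0 then show ?case by simp
  next
    case (Suc m)
    show ?case
    proof (cases "m = 0")
      case True
      then show ?thesis using Gs_step[OF P n PV Gs_0[OF psi]] by simp
    next
      case False
      then have m: "0 < m" "m < n" using Suc by auto
      have IH: "op_at 0 P n d \<psi> \<in> Gs n d m V" using Suc m by auto
      have "op_at m P n d (op_at 0 P n d \<psi>) = op_at 0 P n d (op_at m P n d \<psi>)"
        using m n by (intro op_at_comm) auto
      also have "\<dots> = op_at 0 P n d (op_at 0 P n d \<psi>)" using tr m(2) by metis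
      also have "\<dots> = op_at 0 (P * P) n d \<psi>" by (rule op_at_mult[OF P P n, symmetric])
      also have "\<dots> = op_at 0 P n d \<psi>" using idem by simp
      finally show ?thesis using Gs_step[OF P m(2) PV IH] by simp
    qed
  qed
  from this[of n] n have "op_at 0 P n d \<psi> \<in> Gs n d n V" by simp
  then show ?thesis using Gs_n by blast
qed

theorem theorem4:
  fixes B :: "complex mat" and n d :: nat
    and \<psi> :: "(nat \<Rightarrow> nat) \<Rightarrow> complex"
  assumes "n \<ge> 2"
    and "B \<in> carrier_mat d d"
    and "\<psi> \<in> sym_space n d"
    and "op_first B n d \<psi> \<in> sym_space n d"
  shows "\<exists>\<phi> :: complex \<Rightarrow> (nat \<Rightarrow> nat) \<Rightarrow> complex.
           (\<forall>c\<in>{c. eigenvalue B c}. \<phi> c \<in> sym_power n d (gen_eigenspace B c))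
         \<and> \<psi> = (\<lambda>i. \<Sum>c\<in>{c. eigenvalue B c}. \<phi> c i)"
proof -
  have n: "0 < n" using assms(1) by simp
  have B: "B \<in> carrier_mat d d" by fact
  have psi: "\<psi> \<in> sym_space n d" by fact
  have psiT: "\<psi> \<in> tensor_space n d" using psi unfolding sym_space_def by auto
  have Bs: "op_at 0 B n d \<psi> \<in> sym_space n d" using assms(4) unfolding op_first_at .
  have hk: "op_at k B n d \<psi> = op_at 0 B n d \<psi>" if "k < n" for k
    by (rule op_at_sym[OF psi Bs that])
  let ?E = "{c. eigenvalue B c}"
  obtain P where Pp: "\<forall>c\<in>?E. P c \<in> carrier_mat d d \<and> P c * P c = P c
      \<and> (\<exists>m. (B - c \<cdot>\<^sub>m 1\<^sub>m d) ^\<^sub>m m * P c = 0\<^sub>m d d) \<and> (\<exists>q. P c = meval q B)"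
    and Psum: "\<forall>i<d. \<forall>j<d. (\<Sum>c\<in>?E. P c $$ (i,j)) = (if i = j then 1 else 0)"
    and finE: "finite ?E"
    using projections[OF B] by blast
  define \<phi> where "\<phi> c = op_at 0 (P c) n d \<psi>" for c
  have part: "\<phi> c \<in> sym_power n d (gen_eigenspace B c)" if c: "c \<in> ?E" for c
  proof -
    from Pp c obtain m q where Pc: "P c \<in> carrier_mat d d" and idem: "P c * P c = P c"
      and nil: "(B - c \<cdot>\<^sub>m 1\<^sub>m d) ^\<^sub>m m * P c = 0\<^sub>m d d" and q: "P c = meval q B" by blast
    have tr: "\<forall>k<n. op_at k (P c) n d \<psi> = op_at 0 (P c) n d \<psi>"
      unfolding q using meval_transfer[OF B _ n hk] by blast
    have sym: "\<phi> c \<in> sym_space n d" unfolding \<phi>_def by (rule shift_sym[OF psi n tr])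
    have PV: "\<forall>v\<in>carrier_vec d. P c *\<^sub>v v \<in> gen_eigenspace B c"
    proof
      fix v :: "complex vec" assume v: "v \<in> carrier_vec d"
      have dr: "dim_row B = d" using B by simp
      have "(B - c \<cdot>\<^sub>m 1\<^sub>m d) ^\<^sub>m m *\<^sub>v (P c *\<^sub>v v) = ((B - c \<cdot>\<^sub>m 1\<^sub>m d) ^\<^sub>m m * P c) *\<^sub>v v"
        using B Pc v by (intro assoc_mult_mat_vec[symmetric]) auto
      also have "\<dots> = 0\<^sub>v d" using nil v by (simp, intro eq_vecI) (auto simp: scalar_prod_def)
      finally show "P c *\<^sub>v v \<in> gen_eigenspace B c"
        unfolding gen_eigenspace_def dr using Pc v by auto
    qed
    have "\<phi> c \<in> tensor_power n d (gen_eigenspace B c)"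
      unfolding \<phi>_def by (rule iter_power[OF Pc psiT idem tr n PV])
    with sym show ?thesis unfolding sym_power_def by blast
  qed
  have sum: "\<psi> = (\<lambda>i. \<Sum>c\<in>?E. \<phi> c i)"
  proof (rule ext)
    fix i
    show "\<psi> i = (\<Sum>c\<in>?E. \<phi> c i)"
    proof (cases "i \<in> idx n d")
      case False then show ?thesis using psiT unfolding \<phi>_def op_at_def tensor_space_def by simp
    next
      case True
      have i0: "i 0 < d" using idx_lt[OF True n] .
      have "(\<Sum>c\<in>?E. \<phi> c i) = (\<Sum>c\<in>?E. \<Sum>j<d. P c $$ (i 0, j) * \<psi> (i(0 := j)))"
        unfolding \<phi>_def op_at_def using True by simp
      also have "\<dots> = (\<Sum>j<d. \<Sum>c\<in>?E. P c $$ (i 0, j) * \<psi> (i(0 := j)))" by (rule sum.swap)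
      also have "\<dots> = (\<Sum>j<d. (if i 0 = j then 1 else 0) * \<psi> (i(0 := j)))"
        using Psum i0 by (intro sum.cong refl) (simp add: sum_distrib_right[symmetric])
      also have "\<dots> = (\<Sum>j<d. if j = i 0 then \<psi> (i(0 := j)) else 0)" by (intro sum.cong) auto
      also have "\<dots> = \<psi> i" using i0 by simp
      finally show ?thesis by simp
    qed
  qed
  show ?thesis using part sum by blast
qed


end
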